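(* Let $W$ be a subset of a metric space $(X,d)$ and suppose that the density $\operatorname{den}(W)$ is a cardinal of uncountable cofinality. Then there exists $\varepsilon_0>0$ such that for all $\varepsilon\in\,]0,\varepsilon_0[$, $$\hat{\mathcal N}^X_\varepsilon(W)=\hat{\mathcal N}_\varepsilon(W)=\hat{\mathcal M}_\varepsilon(W)=\mathcal M^*_\varepsilon(W)=\operatorname{den}(W).$$
   Context: $\operatorname{den}(W)$ is the minimal cardinality of a dense subset of the metric subspace $W$. The cofinality of a cardinal (initial ordinal) $\beta$ is the least ordinal $\alpha$ admitting a strictly increasing map $f:\alpha\to\beta$ whose range is cofinal in $\beta$. Closed balls: $B(c,r)=\{x:d(x,c)\le r\}$; $C$ is an $\varepsilon$-net for $W$ if $W\subseteq\bigcup_{c\in C}B(c,\varepsilon)$; $A$ is $\varepsilon$-distinguishable if $d(x,y)>\varepsilon$ for distinct $x,y\in A$. $\hat{\mathcal N}^A_\varepsilon(W)$ is the minimal cardinality of an $\varepsilon$-net $C\subseteq A$ for $W$; $\hat{\mathcal N}_\varepsilon(W):=\hat{\mathcal N}^W_\varepsilon(W)$; $\hat{\mathcal M}_\varepsilon(W)$ is the smallest cardinality of an $\varepsilon$-distinguishable $A\subseteq W$ that is maximal under inclusion among $\varepsilon$-distinguishable subsets of $W$; $\mathcal M^*_\varepsilon(W)$ is the smallest cardinal $\ge\operatorname{card}(A)$ for every $\varepsilon$-distinguishable $A\subseteq W$. *)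

theory Defs
  imports "HOL-Analysis.Analysis"
begin

text \<open>Cardinals are represented by cardinal well-orders card_of (written with bars)
  on sets; equality of cardinals is =o. The metric space X is the whole type 'a.\<close>

definition min_card :: "('a set \<Rightarrow> bool) \<Rightarrow> 'a rel" where
  "min_card P = card_of (SOME C. P C \<and> (\<forall>C'. P C' \<longrightarrow> ordLeq3 (card_of C) (card_of C')))"

definition is_dense_in :: "'a::metric_space set \<Rightarrow> 'a set \<Rightarrow> bool" where
  "is_dense_in D W \<longleftrightarrow> D \<subseteq> W \<and> W \<subseteq> closure D"

definition den :: "'a::metric_space set \<Rightarrow> 'a rel" where
  "den W = min_card (\<lambda>D. is_dense_in D W)"

definition uncountable_cof :: "'a rel \<Rightarrow> bool" where
  "uncountable_cof r \<longleftrightarrow>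
     (\<forall>K. K \<subseteq> Field r \<and> countable K \<longrightarrow> (\<exists>a\<in>Field r. \<forall>b\<in>K. b \<noteq> a \<and> (b, a) \<in> r))"

definition is_net :: "real \<Rightarrow> 'a::metric_space set \<Rightarrow> 'a set \<Rightarrow> bool" where
  "is_net \<epsilon> C W \<longleftrightarrow> W \<subseteq> (\<Union>c\<in>C. cball c \<epsilon>)"

definition distinguishable :: "real \<Rightarrow> 'a::metric_space set \<Rightarrow> bool" where
  "distinguishable \<epsilon> A \<longleftrightarrow> (\<forall>x\<in>A. \<forall>y\<in>A. x \<noteq> y \<longrightarrow> dist x y > \<epsilon>)"

definition Nhat :: "'a::metric_space set \<Rightarrow> real \<Rightarrow> 'a set \<Rightarrow> 'a rel" where
  "Nhat A \<epsilon> W = min_card (\<lambda>C. C \<subseteq> A \<and> is_net \<epsilon> C W)"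

definition Mhat :: "real \<Rightarrow> 'a::metric_space set \<Rightarrow> 'a rel" where
  "Mhat \<epsilon> W = min_card (\<lambda>A. A \<subseteq> W \<and> distinguishable \<epsilon> A \<and>
      (\<forall>B. A \<subseteq> B \<and> B \<subseteq> W \<and> distinguishable \<epsilon> B \<longrightarrow> B = A))"

definition Mstar :: "real \<Rightarrow> 'a::metric_space set \<Rightarrow> 'a rel" where
  "Mstar \<epsilon> W = min_card (\<lambda>S. \<forall>A. A \<subseteq> W \<and> distinguishable \<epsilon> A \<longrightarrow> ordLeq3 (card_of A) (card_of S))"

end

theory Submission
  imports Defs
begin

unbundle cardinal_syntax

lemma min_card_ex:
  assumes "P C"
  shows "\<exists>M. P M \<and> min_card P = |M| \<and> (\<forall>C'. P C' \<longrightarrow> |M| \<le>o |C'| )"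
proof -
  have "\<exists>r \<in> {|C| | C. P C}. \<forall>r' \<in> {|C| | C. P C}. r \<le>o r'"
    by (rule exists_minim_Card_order) (use assms card_of_Card_order in auto)
  then obtain M where M: "P M" "\<forall>C'. P C' \<longrightarrow> |M| \<le>o |C'|" by blast
  let ?Q = "\<lambda>C. P C \<and> (\<forall>C'. P C' \<longrightarrow> |C| \<le>o |C'| )"
  have "?Q (SOME C. ?Q C)" by (rule someI[of ?Q M]) (use M in auto)
  then show ?thesis unfolding min_card_def by blast
qed

lemma distinguishable_le:
  fixes W :: "'a::metric_space set"
  assumes D: "is_dense_in D W" and e: "\<epsilon> > 0" and A: "A \<subseteq> W" "distinguishable \<epsilon> A"
  shows "|A| \<le>o |D|"
proof -
  have "\<forall>a\<in>A. \<exists>d\<in>D. dist d a < \<epsilon>/2"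
  proof
    fix a assume "a \<in> A"
    then have "a \<in> closure D" using A D unfolding is_dense_in_def by blast
    then have "\<forall>e>0. \<exists>d\<in>D. dist d a < e" unfolding closure_approachable .
    moreover have "\<epsilon>/2 > 0" using e by simp
    ultimately show "\<exists>d\<in>D. dist d a < \<epsilon>/2" by blast
  qed
  then obtain f where f: "\<forall>a\<in>A. f a \<in> D \<and> dist (f a) a < \<epsilon>/2" by metis
  have "inj_on f A"
  proof (rule inj_onI, rule ccontr)
    fix x y assume xy: "x \<in> A" "y \<in> A" "f x = f y" "x \<noteq> y"
    then have "dist x y > \<epsilon>" using A(2) unfolding distinguishable_def by blast
    moreover have "dist x y \<le> dist (f x) x + dist (f y) y"
      using dist_triangle3[of x y "f x"] xy(3) by (simp add: dist_commute)
    moreover have "dist (f x) x < \<epsilon>/2" "dist (f y) y < \<epsilon>/2" using f xy(1,2) by auto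
    ultimately show False by linarith
  qed
  moreover have "f ` A \<subseteq> D" using f by blast
  ultimately show ?thesis using card_of_ordLeq by blast
qed

lemma maximal_dist_exists:
  fixes W :: "'a::metric_space set"
  shows "\<exists>A. A \<subseteq> W \<and> distinguishable \<epsilon> A \<and>
      (\<forall>B. A \<subseteq> B \<and> B \<subseteq> W \<and> distinguishable \<epsilon> B \<longrightarrow> B = A)"
proof -
  define S where "S = {A. A \<subseteq> W \<and> distinguishable \<epsilon> A}"
  have "\<forall>C\<in>chains S. \<Union>C \<in> S"
  proof
    fix C assume C: "C \<in> chains S"
    then have ch: "chain\<^sub>\<subseteq> C" and sub: "C \<subseteq> S" by (auto simp: chains_def)
    have "distinguishable \<epsilon> (\<Union>C)" unfolding distinguishable_def
    proof (intro ballI impI)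
      fix x y assume "x \<in> \<Union>C" "y \<in> \<Union>C" "x \<noteq> y"
      then obtain X Y where XY: "X \<in> C" "Y \<in> C" "x \<in> X" "y \<in> Y" by blast
      have dX: "distinguishable \<epsilon> X" and dY: "distinguishable \<epsilon> Y"
        using XY(1,2) sub unfolding S_def by auto
      have "X \<subseteq> Y \<or> Y \<subseteq> X" using ch XY(1,2) unfolding chain_subset_def by blast
      then show "dist x y > \<epsilon>"
      proof
        assume "X \<subseteq> Y" then show ?thesis
          using dY XY(3,4) \<open>x \<noteq> y\<close> unfolding distinguishable_def by blast
      next
        assume "Y \<subseteq> X" then show ?thesis
          using dX XY(3,4) \<open>x \<noteq> y\<close> unfolding distinguishable_def by blast
      qed
    qed
    moreover have "\<Union>C \<subseteq> W" using sub unfolding S_def by auto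
    ultimately show "\<Union>C \<in> S" unfolding S_def by blast
  qed
  from Zorn_Lemma[OF this] obtain M where M: "M \<in> S" "\<forall>X\<in>S. M \<subseteq> X \<longrightarrow> X = M" by blast
  show ?thesis
  proof (intro exI conjI allI impI)
    show "M \<subseteq> W" "distinguishable \<epsilon> M" using M(1) unfolding S_def by auto
    fix B assume "M \<subseteq> B \<and> B \<subseteq> W \<and> distinguishable \<epsilon> B"
    then show "B = M" using M(2) unfolding S_def by blast
  qed
qed

lemma maximal_is_net:
  fixes W :: "'a::metric_space set"
  assumes "\<epsilon> > 0" "A \<subseteq> W" "distinguishable \<epsilon> A"
      "\<forall>B. A \<subseteq> B \<and> B \<subseteq> W \<and> distinguishable \<epsilon> B \<longrightarrow> B = A"
  shows "is_net \<epsilon> A W"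
  unfolding is_net_def
proof
  fix w assume w: "w \<in> W"
  show "w \<in> (\<Union>c\<in>A. cball c \<epsilon>)"
  proof (rule ccontr)
    assume nw: "w \<notin> (\<Union>c\<in>A. cball c \<epsilon>)"
    have far: "\<forall>a\<in>A. dist a w > \<epsilon>"
    proof
      fix a assume "a \<in> A"
      then have "w \<notin> cball a \<epsilon>" using nw by blast
      then show "dist a w > \<epsilon>" by (simp add: mem_cball)
    qed
    have "w \<notin> A"
    proof
      assume "w \<in> A" then have "dist w w > \<epsilon>" using far by blast
      then show False using assms(1) by simp
    qed
    have "distinguishable \<epsilon> (insert w A)"
      unfolding distinguishable_def
    proof (intro ballI impI)
      fix x y assume "x \<in> insert w A" "y \<in> insert w A" "x \<noteq> y"
      then show "dist x y > \<epsilon>" using assms(3) far unfolding distinguishable_def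
        by (auto simp: dist_commute)
    qed
    moreover have "A \<subseteq> insert w A" "insert w A \<subseteq> W" using assms(2) w by auto
    ultimately have "insert w A = A" using assms(4) by blast
    then show False using \<open>w \<notin> A\<close> by blast
  qed
qed


lemma countable_iff_le_nat: "countable A \<longleftrightarrow> |A| \<le>o |UNIV::nat set|"
  unfolding countable_def card_of_ordLeq[symmetric] by auto

lemma net_mono:
  assumes "is_net \<epsilon> C W" "\<epsilon> \<le> \<delta>"
  shows "is_net \<delta> C W"
  unfolding is_net_def
proof
  fix x assume "x \<in> W"
  then obtain c where "c \<in> C" "x \<in> cball c \<epsilon>" using assms(1) unfolding is_net_def by blast
  then have "x \<in> cball c \<delta>" using assms(2) by (simp add: mem_cball)
  then show "x \<in> (\<Union>c\<in>C. cball c \<delta>)" using \<open>c \<in> C\<close> by blast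
qed

lemma lower_bound:
  fixes W :: "'a::metric_space set"
  assumes unc: "uncountable_cof |D0|" and D0: "is_dense_in D0 W"
    and minD: "\<forall>D. is_dense_in D W \<longrightarrow> |D0| \<le>o |D|"
  shows "\<exists>n::nat. \<forall>C. is_net (1/real (Suc n)) C W \<longrightarrow> |D0| \<le>o |C|"
proof (rule ccontr)
  assume neg: "\<not> ?thesis"
  have "\<exists>C. is_net (1/real (Suc n)) C W \<and> |C| <o |D0|" for n
  proof -
    from neg obtain C where C: "is_net (1/real (Suc n)) C W" "\<not> |D0| \<le>o |C|" by blast
    have "|C| <o |D0|"
      using C(2) not_ordLeq_iff_ordLess[of "|C|" "|D0|"] card_of_Well_order by blast
    with C(1) show ?thesis by blast
  qed
  then have "\<forall>n. \<exists>C. is_net (1/real (Suc n)) C W \<and> |C| <o |D0|" by blast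
  then obtain Cn where Cn0: "\<forall>n. is_net (1/real (Suc n)) (Cn n) W \<and> |Cn n| <o |D0|"
    by (rule choice[THEN exE])
  have Cn: "is_net (1/real (Suc n)) (Cn n) W" "|Cn n| <o |D0|" for n using Cn0 by auto
  let ?r = "|D0|"
  have wo: "Well_order ?r" by (rule card_of_Well_order)
  then have wr: "wo_rel ?r" unfolding wo_rel_def .
  have tr: "trans ?r" by (rule wo_rel.TRANS[OF wr])
  have anti: "antisym ?r" by (rule wo_rel.ANTISYM[OF wr])
  have "\<exists>a\<in>D0. |Cn n| =o Restr ?r (underS ?r a)" for n
  proof -
    have "\<exists>a\<in>Field ?r. |Cn n| =o Restr ?r (underS ?r a)"
      using Cn(2)[of n] ordLess_iff_ordIso_Restr[OF wo card_of_Well_order] by blast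
    then show ?thesis unfolding Field_card_of .
  qed
  then have "\<forall>n. \<exists>a\<in>D0. |Cn n| =o Restr ?r (underS ?r a)" by blast
  then obtain an where an0: "\<forall>n. an n \<in> D0 \<and> |Cn n| =o Restr ?r (underS ?r (an n))"
    unfolding Bex_def by (rule choice[THEN exE])
  have an: "an n \<in> D0" "|Cn n| =o Restr ?r (underS ?r (an n))" for n
    using an0 by blast+
  have rsub: "range an \<subseteq> Field ?r" unfolding Field_card_of using an(1) by blast
  have rcount: "countable (range an)" by (rule countable_image) simp
  have uc: "\<forall>K. K \<subseteq> Field ?r \<and> countable K \<longrightarrow> (\<exists>a\<in>Field ?r. \<forall>b\<in>K. b \<noteq> a \<and> (b, a) \<in> ?r)"
    using unc unfolding uncountable_cof_def .
  then have "\<exists>a\<in>Field ?r. \<forall>b\<in>range an. b \<noteq> a \<and> (b, a) \<in> ?r"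
    using rsub rcount by blast
  then obtain a where a1: "a \<in> Field ?r" and a2: "\<forall>b\<in>range an. b \<noteq> a \<and> (b, a) \<in> ?r"
    by blast
  have a: "a \<in> Field ?r" "an n \<noteq> a \<and> (an n, a) \<in> ?r" for n
    using a1 a2 by simp_all
  define B where "B = underS ?r a"
  have B_less: "|B| <o ?r" unfolding B_def
    by (rule card_of_underS[OF card_of_Card_order a(1)])
  have CnB: "|Cn n| \<le>o |B|" for n
  proof -
    have "|Field |Cn n| | \<le>o |Field (Restr ?r (underS ?r (an n)))|"
      by (rule card_of_mono2[OF ordIso_imp_ordLeq[OF an(2)]])
    then have 1: "|Cn n| \<le>o |Field (Restr ?r (underS ?r (an n)))|" by (simp add: Field_card_of)
    have "Field (Restr ?r (underS ?r (an n))) \<subseteq> underS ?r (an n)" by (rule Field_Restr_subset)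
    also have "underS ?r (an n) \<subseteq> B"
    proof
      fix x assume "x \<in> underS ?r (an n)"
      then have x: "x \<noteq> an n" "(x, an n) \<in> ?r" unfolding underS_def by auto
      have "(x, a) \<in> ?r" using tr x(2) a(2)[of n] unfolding trans_def by blast
      moreover have "x \<noteq> a"
      proof
        assume "x = a" then show False using anti x a(2)[of n] unfolding antisym_def by blast
      qed
      ultimately show "x \<in> B" unfolding B_def underS_def by auto
    qed
    finally show ?thesis using 1 card_of_mono1 ordLeq_transitive by blast
  qed
  define g where "g n c = (SOME w. w \<in> W \<and> dist c w \<le> 1/real (Suc n))" for n c
  define Dn where "Dn n = g n ` {c \<in> Cn n. \<exists>w\<in>W. dist c w \<le> 1/real (Suc n)}" for n
  define D where "D = (\<Union>n. Dn n)"
  have g: "g n c \<in> W \<and> dist c (g n c) \<le> 1/real (Suc n)" if "\<exists>w\<in>W. dist c w \<le> 1/real (Suc n)" for n c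
    unfolding g_def by (rule someI_ex) (use that in blast)
  have DW: "D \<subseteq> W" unfolding D_def Dn_def using g by blast
  have "W \<subseteq> closure D"
  proof
    fix w assume w: "w \<in> W"
    show "w \<in> closure D" unfolding closure_approachable
    proof (intro allI impI)
      fix e :: real assume "e > 0"
      then have "e/2 > 0" by simp
      then obtain n where n: "inverse (real (Suc n)) < e/2" using reals_Archimedean by blast
      have "w \<in> (\<Union>c\<in>Cn n. cball c (1/real (Suc n)))" using Cn(1)[of n] w unfolding is_net_def by blast
      then obtain c where c: "c \<in> Cn n" "dist c w \<le> 1/real (Suc n)" by (auto simp: mem_cball)
      then have ex: "\<exists>w\<in>W. dist c w \<le> 1/real (Suc n)" using w by blast
      have "g n c \<in> D" unfolding D_def Dn_def using c(1) ex by blast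
      moreover have "dist (g n c) w \<le> dist c (g n c) + dist c w" by (rule dist_triangle3)
      then have "dist (g n c) w < e" using g[OF ex] c(2) n by (simp add: inverse_eq_divide)
      ultimately show "\<exists>y\<in>D. dist y w < e" by blast
    qed
  qed
  then have "|D0| \<le>o |D|" using minD DW unfolding is_dense_in_def by blast
  have DnB: "|Dn n| \<le>o |B|" for n
  proof -
    have "|Dn n| \<le>o |{c \<in> Cn n. \<exists>w\<in>W. dist c w \<le> 1/real (Suc n)}|"
      unfolding Dn_def by (rule card_of_image)
    also have "|{c \<in> Cn n. \<exists>w\<in>W. dist c w \<le> 1/real (Suc n)}| \<le>o |Cn n|" by (rule card_of_mono1) blast
    also have "|Cn n| \<le>o |B|" by (rule CnB)
    finally show ?thesis .
  qed
  show False
  proof (cases "finite B")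
    case True
    then have "finite (Dn n)" for n using DnB card_of_ordLeq_finite by blast
    then have "countable D" unfolding D_def by (simp add: countable_finite)
    then have "|D| \<le>o |UNIV::nat set|" using countable_iff_le_nat by blast
    then have "countable D0" using \<open>|D0| \<le>o |D|\<close> countable_iff_le_nat ordLeq_transitive by blast
    moreover have "D0 \<subseteq> Field ?r" unfolding Field_card_of by blast
    ultimately obtain b where "b \<in> Field ?r" "\<forall>x\<in>D0. x \<noteq> b" using uc by blast
    then show False unfolding Field_card_of by blast
  next
    case False
    have "|\<Union>n. Dn n| \<le>o |B|"
      by (rule card_of_UNION_ordLeq_infinite[OF False]) (use False infinite_iff_card_of_nat DnB in auto)
    then have "|D| <o ?r" unfolding D_def using B_less ordLeq_ordLess_trans by blast
    then show False using \<open>|D0| \<le>o |D|\<close> not_ordLess_ordLeq by blast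
  qed
qed

theorem theorem2p10:
  fixes W :: "'a::metric_space set"
  assumes "uncountable_cof (den W)"
  shows "\<exists>\<epsilon>0>0. \<forall>\<epsilon>. 0 < \<epsilon> \<and> \<epsilon> < \<epsilon>0 \<longrightarrow>
           ordIso2 (Nhat UNIV \<epsilon> W) (Nhat W \<epsilon> W) \<and> ordIso2 (Nhat W \<epsilon> W) (Mhat \<epsilon> W) \<and>
           ordIso2 (Mhat \<epsilon> W) (Mstar \<epsilon> W) \<and> ordIso2 (Mstar \<epsilon> W) (den W)"
proof -
  have "is_dense_in W W" unfolding is_dense_in_def using closure_subset by blast
  from min_card_ex[of "\<lambda>D. is_dense_in D W", OF this] obtain D0 where
    D0: "is_dense_in D0 W" "den W = |D0|" "\<forall>D. is_dense_in D W \<longrightarrow> |D0| \<le>o |D|"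
    unfolding den_def by blast
  obtain n :: nat where n: "\<forall>C. is_net (1/real (Suc n)) C W \<longrightarrow> |D0| \<le>o |C|"
    using lower_bound[of D0 W] assms D0 by auto
  show ?thesis
  proof (intro exI[of _ "1/real (Suc n)"] conjI allI impI)
    show "1/real (Suc n) > 0" by simp
    fix \<epsilon> :: real assume e: "0 < \<epsilon> \<and> \<epsilon> < 1/real (Suc n)"
    have WW: "is_net \<epsilon> W W" unfolding is_net_def using e by force
    from min_card_ex[of "\<lambda>C. C \<subseteq> UNIV \<and> is_net \<epsilon> C W" W] WW obtain C1 where
      C1: "is_net \<epsilon> C1 W" "Nhat UNIV \<epsilon> W = |C1|" "\<forall>C. is_net \<epsilon> C W \<longrightarrow> |C1| \<le>o |C|"
      unfolding Nhat_def by auto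
    from min_card_ex[of "\<lambda>C. C \<subseteq> W \<and> is_net \<epsilon> C W" W] WW obtain C2 where
      C2: "C2 \<subseteq> W" "is_net \<epsilon> C2 W" "Nhat W \<epsilon> W = |C2|"
        "\<forall>C. C \<subseteq> W \<and> is_net \<epsilon> C W \<longrightarrow> |C2| \<le>o |C|"
      unfolding Nhat_def by auto
    obtain A0 where "A0 \<subseteq> W \<and> distinguishable \<epsilon> A0 \<and>
      (\<forall>B. A0 \<subseteq> B \<and> B \<subseteq> W \<and> distinguishable \<epsilon> B \<longrightarrow> B = A0)"
      using maximal_dist_exists by blast
    from min_card_ex[of "\<lambda>A. A \<subseteq> W \<and> distinguishable \<epsilon> A \<and>
      (\<forall>B. A \<subseteq> B \<and> B \<subseteq> W \<and> distinguishable \<epsilon> B \<longrightarrow> B = A)", OF this] obtain A where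
      A: "A \<subseteq> W" "distinguishable \<epsilon> A" "\<forall>B. A \<subseteq> B \<and> B \<subseteq> W \<and> distinguishable \<epsilon> B \<longrightarrow> B = A"
        "Mhat \<epsilon> W = |A|"
      unfolding Mhat_def by blast
    have "\<forall>A. A \<subseteq> W \<and> distinguishable \<epsilon> A \<longrightarrow> |A| \<le>o |D0|"
      using distinguishable_le[OF D0(1)] e by blast
    from min_card_ex[of "\<lambda>S. \<forall>A. A \<subseteq> W \<and> distinguishable \<epsilon> A \<longrightarrow> |A| \<le>o |S|", OF this]
    obtain S where S: "\<forall>A. A \<subseteq> W \<and> distinguishable \<epsilon> A \<longrightarrow> |A| \<le>o |S|" "Mstar \<epsilon> W = |S|"
      "|S| \<le>o |D0|"
      unfolding Mstar_def using \<open>\<forall>A. A \<subseteq> W \<and> distinguishable \<epsilon> A \<longrightarrow> |A| \<le>o |D0|\<close> by blast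
    have l1: "|D0| \<le>o |C1|" using n net_mono[OF C1(1)] e by auto
    have l2: "|C1| \<le>o |C2|" using C1(3) C2(2) by blast
    have l3: "|C2| \<le>o |A|" using C2(4) A(1) maximal_is_net[of \<epsilon> A W] A(2,3) e by blast
    have l4: "|A| \<le>o |S|" using S(1) A(1,2) by blast
    note l5 = S(3)
    have u4: "|S| \<le>o |D0|" by (rule l5)
    have u3: "|A| \<le>o |D0|" by (rule ordLeq_transitive[OF l4 u4])
    have u2: "|C2| \<le>o |D0|" by (rule ordLeq_transitive[OF l3 u3])
    have u1: "|C1| \<le>o |D0|" by (rule ordLeq_transitive[OF l2 u2])
    have d2: "|D0| \<le>o |C2|" by (rule ordLeq_transitive[OF l1 l2])
    have d3: "|D0| \<le>o |A|" by (rule ordLeq_transitive[OF d2 l3])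
    have d4: "|D0| \<le>o |S|" by (rule ordLeq_transitive[OF d3 l4])
    have i1: "|C1| =o |D0|" "|C2| =o |D0|" "|A| =o |D0|" "|S| =o |D0|"
      unfolding ordIso_iff_ordLeq using u1 u2 u3 u4 l1 d2 d3 d4 by auto
    have i2: "|D0| =o |C2|" "|D0| =o |A|" "|D0| =o |S|"
      using i1 ordIso_symmetric by auto
    show "ordIso2 (Nhat UNIV \<epsilon> W) (Nhat W \<epsilon> W)" unfolding C1(2) C2(3)
      by (rule ordIso_transitive[OF i1(1) i2(1)])
    show "ordIso2 (Nhat W \<epsilon> W) (Mhat \<epsilon> W)" unfolding A(4) C2(3)
      by (rule ordIso_transitive[OF i1(2) i2(2)])
    show "ordIso2 (Mhat \<epsilon> W) (Mstar \<epsilon> W)" unfolding A(4) S(2)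
      by (rule ordIso_transitive[OF i1(3) i2(3)])
    show "ordIso2 (Mstar \<epsilon> W) (den W)" unfolding D0(2) S(2) by (rule i1(4))
  qed
qed

end
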